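(* Assume the setting below. There exists a constant $C\geq0$ (independent of $h$ and $\Delta x$) such that $$\sup_{n=0,\ldots,N,\ m\in\mathbb Z^d}|\widehat v(t_n,x_m)-V(t_n,x_m)|\leq C\frac{|\Delta x|}{h}.$$
   Context: Let $T>0$, $d,p,q\ge1$, let $A\subseteq\mathbb R^q$ be a compact subset of a separable metric space, and let $\mu:[0,T]\times\mathbb R^d\times A\to\mathbb R^d$, $\sigma:[0,T]\times\mathbb R^d\times A\to\mathbb R^{d\times p}$ be continuous with $|\mu(t,x,a)-\mu(s,y,a)|+\|\sigma(t,x,a)-\sigma(s,y,a)\|\leq C_0(|x-y|+|t-s|^{1/2})$ for all arguments. Let $\psi:\mathbb R^d\to\mathbb R$ be continuous with $|\psi(x)-\psi(y)|\le L|x-y|$. Let $N\ge1$, $h=T/N$, $t_n=nh$. Let $M\ge2$ and $(\hat\lambda_i,\hat\xi_i)_{i=1}^{\hat M}$, $\hat\lambda_i\ge0$, $\hat\xi_i\in\mathbb R^p$, a cubature rule exact for all polynomials of degree $\le2M-1$ with respect to $\mathcal N(0,I_p)$. Define $\widehat v(t_N,\cdot)=\psi$ and $\widehat v(t_n,x)=\sup_{a\in A}\sum_i\hat\lambda_i\widehat v(t_{n+1},x+\mu(t_n,x,a)h+\sqrt h\sigma(t_n,x,a)\hat\xi_i)$ for $n=N-1,\dots,0$, $x\in\mathbb R^d$. Let $\Delta x=(\Delta x_1,\ldots,\Delta x_d)$ with $\Delta x_j>0$, grid $\mathcal G_{\Delta x}=\{x_m=m\Delta x:\ m\in\mathbb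 Z^d\}$ (componentwise product), and let $\mathcal I[\phi]$ be the standard multilinear interpolant of a function $\phi$ on this grid (so $\mathcal I[\phi](x_m)=\phi(x_m)$, $|\mathcal I[\phi](x)-\phi(x)|\le L_\phi|\Delta x|$ for $L_\phi$-Lipschitz $\phi$, and $\phi_1\le\phi_2\Rightarrow\mathcal I[\phi_1]\le\mathcal I[\phi_2]$). Define $V(t_N,x_m)=\psi(x_m)$ and for $n=N-1,\ldots,0$, $m\in\mathbb Z^d$: $V(t_n,x_m)=\sup_{a\in A}\sum_{i=1}^{\hat M}\hat\lambda_i\,\mathcal I[V(t_{n+1},\cdot)]\big(x_m+\mu(t_n,x_m,a)h+\sqrt h\sigma(t_n,x_m,a)\hat\xi_i\big)$. *)

theory Defs
  imports "HOL-Probability.Probability"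
begin

definition grid_pt :: "real^'d \<Rightarrow> int^'d \<Rightarrow> real^'d" where
  "grid_pt dx m = (\<chi> j. real_of_int (m$j) * dx$j)"

text \<open>Standard multilinear (Q1) interpolant of grid data phi (phi m = value at x_m).\<close>
definition interp :: "real^'d \<Rightarrow> (int^'d \<Rightarrow> real) \<Rightarrow> real^'d \<Rightarrow> real" where
  "interp dx phi x =
     (let m = (\<chi> j. \<lfloor>x$j / dx$j\<rfloor>);
          \<theta> = (\<lambda>j. x$j / dx$j - real_of_int (m$j))
      in \<Sum>e\<in>(UNIV::('d \<Rightarrow> bool) set).
           (\<Prod>j\<in>UNIV. if e j then \<theta> j else 1 - \<theta> j)
           * phi (\<chi> j. m$j + (if e j then 1 else 0)))"

definition gauss_moment :: "('p::finite \<Rightarrow> nat) \<Rightarrow> real" where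
  "gauss_moment \<alpha> =
     (LINT x|lborel. (\<Prod>j\<in>UNIV. ((x::real^'p)$j) ^ (\<alpha> j)) * (\<Prod>j\<in>UNIV. std_normal_density (x$j)))"

text \<open>Cubature rule (weights lam i, nodes xi i, i < Mh) exact for all polynomials of
  total degree \<le> K w.r.t. N(0,I_p), i.e. (by linearity) for all monomials of degree \<le> K.\<close>
definition cubature_exact :: "nat \<Rightarrow> (nat \<Rightarrow> real) \<Rightarrow> (nat \<Rightarrow> real^'p) \<Rightarrow> nat \<Rightarrow> bool" where
  "cubature_exact Mh lam xi K =
     (\<forall>\<alpha>::'p \<Rightarrow> nat. (\<Sum>j\<in>UNIV. \<alpha> j) \<le> K \<longrightarrow>
        (\<Sum>i<Mh. lam i * (\<Prod>j\<in>UNIV. (xi i $ j) ^ (\<alpha> j))) = gauss_moment \<alpha>)"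

definition dp_step ::
  "real \<Rightarrow> (real \<Rightarrow> real^'d \<Rightarrow> real^'q \<Rightarrow> real^'d) \<Rightarrow> (real \<Rightarrow> real^'d \<Rightarrow> real^'q \<Rightarrow> real^'p^'d)
   \<Rightarrow> (real^'q) set \<Rightarrow> nat \<Rightarrow> (nat \<Rightarrow> real) \<Rightarrow> (nat \<Rightarrow> real^'p)
   \<Rightarrow> real \<Rightarrow> (real^'d \<Rightarrow> real) \<Rightarrow> real^'d \<Rightarrow> real" where
  "dp_step h mu sg A Mh lam xi t f x =
     (SUP a\<in>A. \<Sum>i<Mh. lam i * f (x + h *\<^sub>R mu t x a + sqrt h *\<^sub>R (sg t x a *v xi i)))"

text \<open>Semi-discrete scheme, indexed by k = N - n (number of backward steps done); h = T/N.\<close>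
primrec vhat_rev ::
  "real \<Rightarrow> nat \<Rightarrow> (real \<Rightarrow> real^'d \<Rightarrow> real^'q \<Rightarrow> real^'d) \<Rightarrow> (real \<Rightarrow> real^'d \<Rightarrow> real^'q \<Rightarrow> real^'p^'d)
   \<Rightarrow> (real^'q) set \<Rightarrow> nat \<Rightarrow> (nat \<Rightarrow> real) \<Rightarrow> (nat \<Rightarrow> real^'p) \<Rightarrow> (real^'d \<Rightarrow> real)
   \<Rightarrow> nat \<Rightarrow> real^'d \<Rightarrow> real" where
  "vhat_rev T N mu sg A Mh lam xi psi 0 = psi"
| "vhat_rev T N mu sg A Mh lam xi psi (Suc k) =
     dp_step (T / real N) mu sg A Mh lam xi (real (N - Suc k) * (T / real N))
       (vhat_rev T N mu sg A Mh lam xi psi k)"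

definition vhat where
  "vhat T N mu sg A Mh lam xi psi n = vhat_rev T N mu sg A Mh lam xi psi (N - n)"

primrec V_rev ::
  "real \<Rightarrow> nat \<Rightarrow> (real \<Rightarrow> real^'d \<Rightarrow> real^'q \<Rightarrow> real^'d) \<Rightarrow> (real \<Rightarrow> real^'d \<Rightarrow> real^'q \<Rightarrow> real^'p^'d)
   \<Rightarrow> (real^'q) set \<Rightarrow> nat \<Rightarrow> (nat \<Rightarrow> real) \<Rightarrow> (nat \<Rightarrow> real^'p) \<Rightarrow> (real^'d \<Rightarrow> real)
   \<Rightarrow> real^'d \<Rightarrow> nat \<Rightarrow> int^'d \<Rightarrow> real" where
  "V_rev T N mu sg A Mh lam xi psi dx 0 = (\<lambda>m. psi (grid_pt dx m))"
| "V_rev T N mu sg A Mh lam xi psi dx (Suc k) =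
     (\<lambda>m. dp_step (T / real N) mu sg A Mh lam xi (real (N - Suc k) * (T / real N))
            (interp dx (V_rev T N mu sg A Mh lam xi psi dx k)) (grid_pt dx m))"

definition V where
  "V T N mu sg A Mh lam xi psi dx n = V_rev T N mu sg A Mh lam xi psi dx (N - n)"

end

theory Submission
  imports Defs
begin

lemma integral_lborel_prod:
  fixes f :: "'a::euclidean_space \<Rightarrow> real \<Rightarrow> real"
  assumes "\<And>b. b \<in> Basis \<Longrightarrow> integrable lborel (f b)"
  shows "(LINT x|lborel. (\<Prod>b\<in>Basis. f b (x \<bullet> b))) = (\<Prod>b\<in>Basis. (LINT x|lborel. f b x))"
proof -
  have [measurable]: "\<And>b. b \<in> Basis \<Longrightarrow> f b \<in> borel_measurable borel"
    using assms borel_measurable_integrable by fastforce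
  have m: "(\<lambda>g. \<Sum>b\<in>Basis. g b *\<^sub>R b) \<in> (\<Pi>\<^sub>M b\<in>(Basis::'a set). lborel) \<rightarrow>\<^sub>M borel"
    by measurable
  have "(LINT x|lborel. (\<Prod>b\<in>Basis. f b (x \<bullet> b))) =
     (LINT g|(\<Pi>\<^sub>M b\<in>(Basis::'a set). lborel). (\<Prod>b\<in>Basis. f b ((\<Sum>b\<in>Basis. g b *\<^sub>R b) \<bullet> b)))"
    apply (subst lborel_eq)
    apply (rule integral_distr[OF m])
    by measurable
  also have "\<dots> = (LINT g|(\<Pi>\<^sub>M b\<in>(Basis::'a set). lborel). (\<Prod>b\<in>Basis. f b (g b)))"
    apply (rule Bochner_Integration.integral_cong[OF refl])
    apply (rule prod.cong[OF refl])
    by (simp add: inner_sum_left inner_Basis if_distrib cong: if_cong)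
  also have "\<dots> = (\<Prod>b\<in>Basis. (LINT x|lborel. f b x))"
    apply (rule product_sigma_finite.product_integral_prod)
    using assms by (auto intro: product_sigma_finite.intro simp: lborel.sigma_finite_measure_axioms)
  finally show ?thesis .
qed

lemma basis_cart: "(Basis :: (real^'n) set) = range (\<lambda>j. axis j 1)"
  by (auto simp: Basis_vec_def)

lemma integral_lborel_prod_cart:
  fixes g :: "'n::finite \<Rightarrow> real \<Rightarrow> real"
  assumes "\<And>j. integrable lborel (g j)"
  shows "(LINT x|lborel. (\<Prod>j\<in>UNIV. g j ((x::real^'n) $ j))) = (\<Prod>j\<in>UNIV. (LINT s|lborel. g j s))"
proof -
  define f where "f b = g (axis_index b)" for b :: "real^'n"
  have inj: "inj (\<lambda>j::'n. axis j (1::real))"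
    by (auto simp: inj_on_def axis_eq_axis)
  have fa: "f (axis j 1) = g j" for j
    by (simp add: f_def axis_index_def axis_eq_axis)
  have "(LINT x|lborel. (\<Prod>j\<in>UNIV. g j ((x::real^'n) $ j))) = (LINT x|lborel. (\<Prod>b\<in>Basis. f b (x \<bullet> b)))"
    unfolding basis_cart prod.reindex[OF inj]
    by (simp add: fa cart_eq_inner_axis)
  also have "\<dots> = (\<Prod>b\<in>Basis. (LINT x|lborel. f b x))"
    by (rule integral_lborel_prod) (auto simp: basis_cart fa assms)
  also have "\<dots> = (\<Prod>j\<in>UNIV. (LINT s|lborel. g j s))"
    unfolding basis_cart prod.reindex[OF inj] by (simp add: fa)
  finally show ?thesis .
qed

lemma gauss_moment_prod:
  "gauss_moment (\<alpha>::'p::finite \<Rightarrow> nat) = (\<Prod>j\<in>UNIV. LBINT s. std_normal_density s * s ^ \<alpha> j)"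
proof -
  have "gauss_moment \<alpha> = (LINT x|lborel. (\<Prod>j\<in>UNIV. std_normal_density ((x::real^'p) $ j) * (x $ j) ^ \<alpha> j))"
    unfolding gauss_moment_def prod.distrib by (simp add: mult.commute)
  also have "\<dots> = (\<Prod>j\<in>UNIV. LBINT s. std_normal_density s * s ^ \<alpha> j)"
    by (rule integral_lborel_prod_cart[where g = "\<lambda>j s. std_normal_density s * s ^ \<alpha> j"])
       (rule integrable_std_normal_moment)
  finally show ?thesis .
qed

lemma cub_facts:
  fixes xi :: "nat \<Rightarrow> real^'p"
  assumes "cubature_exact Mh lam xi (2*M-1)" "M \<ge> 2"
  shows "(\<Sum>i<Mh. lam i) = 1" and "(\<Sum>i<Mh. lam i * xi i $ k) = 0"
proof -
  have "(\<Sum>i<Mh. lam i * (\<Prod>j\<in>UNIV. (xi i $ j) ^ ((\<lambda>_. 0::nat) j))) = gauss_moment (\<lambda>_::'p. 0::nat)"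
    using assms(1) unfolding cubature_exact_def by (drule_tac x="\<lambda>_. 0" in spec) simp
  moreover have "gauss_moment (\<lambda>_::'p. 0::nat) = 1"
    unfolding gauss_moment_prod using integral_std_normal_moment_even[of 0] by simp
  ultimately show "(\<Sum>i<Mh. lam i) = 1" by simp
next
  define \<alpha> where "\<alpha> = (\<lambda>j::'p. if j = k then 1 else (0::nat))"
  have s: "(\<Sum>j\<in>UNIV. \<alpha> j) = 1" unfolding \<alpha>_def by simp
  have "(\<Sum>i<Mh. lam i * (\<Prod>j\<in>UNIV. (xi i $ j) ^ (\<alpha> j))) = gauss_moment \<alpha>"
    using assms s unfolding cubature_exact_def by auto
  moreover have "(\<Prod>j\<in>UNIV. (xi i $ j) ^ (\<alpha> j)) = xi i $ k" for i
  proof -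
    have "(\<Prod>j\<in>UNIV. (xi i $ j) ^ (\<alpha> j)) = (\<Prod>j\<in>UNIV. if j = k then xi i $ j else 1)"
      by (rule prod.cong) (auto simp: \<alpha>_def)
    then show ?thesis by simp
  qed
  moreover have "gauss_moment \<alpha> = 0"
    unfolding gauss_moment_prod
    apply (rule prod_zero)
    using integral_std_normal_moment_odd[of 0] by (auto simp: \<alpha>_def intro!: bexI[of _ k])
  ultimately show "(\<Sum>i<Mh. lam i * xi i $ k) = 0" by simp
qed

lemma sup_diff:
  fixes f g :: "'a \<Rightarrow> real"
  assumes "A \<noteq> {}" "bdd_above (g ` A)" "\<And>a. a \<in> A \<Longrightarrow> \<bar>f a - g a\<bar> \<le> c"
  shows "\<bar>(SUP a\<in>A. f a) - (SUP a\<in>A. g a)\<bar> \<le> c"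
proof -
  obtain B where B: "\<And>a. a \<in> A \<Longrightarrow> g a \<le> B" using assms(2) by (auto simp: bdd_above_def)
  have bf: "bdd_above (f ` A)"
    unfolding bdd_above_def using B assms(3) by (intro exI[of _ "B + c"]) (force simp: abs_le_iff)
  have 1: "(SUP a\<in>A. f a) \<le> (SUP a\<in>A. g a) + c"
  proof (rule cSUP_least[OF assms(1)])
    fix a assume a: "a \<in> A"
    have "f a \<le> g a + c" using assms(3)[OF a] by (simp add: abs_le_iff)
    also have "g a \<le> (SUP a\<in>A. g a)" by (rule cSUP_upper[OF a assms(2)])
    finally show "f a \<le> (SUP a\<in>A. g a) + c" by simp
  qed
  have 2: "(SUP a\<in>A. g a) \<le> (SUP a\<in>A. f a) + c"
  proof (rule cSUP_least[OF assms(1)])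
    fix a assume a: "a \<in> A"
    have "g a \<le> f a + c" using assms(3)[OF a] by (simp add: abs_le_iff)
    also have "f a \<le> (SUP a\<in>A. f a)" by (rule cSUP_upper[OF a bf])
    finally show "g a \<le> (SUP a\<in>A. f a) + c" by simp
  qed
  show ?thesis using 1 2 by (simp add: abs_le_iff)
qed

lemma norm_mat_vec:
  fixes B :: "real^'p^'d"
  shows "norm (B *v v) \<le> real CARD('d) * norm B * norm v"
proof -
  have "norm (B *v v) \<le> (\<Sum>i\<in>UNIV. \<bar>(B *v v) $ i\<bar>)" by (rule norm_le_l1_cart)
  also have "\<dots> \<le> (\<Sum>i\<in>(UNIV::'d set). norm B * norm v)"
  proof (rule sum_mono)
    fix i
    have "(B *v v) $ i = inner (B $ i) v"
      by (simp add: matrix_vector_mult_def inner_vec_def)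
    then have "\<bar>(B *v v) $ i\<bar> \<le> norm (B $ i) * norm v" using Cauchy_Schwarz_ineq2 by simp
    also have "\<dots> \<le> norm B * norm v"
    proof -
      have "norm (B $ i) \<le> norm B" by (rule Finite_Cartesian_Product.norm_nth_le)
      then show ?thesis by (simp add: mult_right_mono)
    qed
    finally show "\<bar>(B *v v) $ i\<bar> \<le> norm B * norm v" .
  qed
  finally show ?thesis by simp
qed

lemma prod_if_sum:
  fixes a b :: "'d::finite \<Rightarrow> real"
  shows "(\<Sum>e\<in>(UNIV::('d \<Rightarrow> bool) set). \<Prod>j\<in>UNIV. if e j then a j else b j) = (\<Prod>j\<in>UNIV. a j + b j)"
proof -
  have "(\<Sum>e\<in>(UNIV::('d \<Rightarrow> bool) set). \<Prod>j\<in>UNIV. if e j then a j else b j)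
      = (\<Sum>X\<in>Pow UNIV. prod a X * prod b (UNIV - X))"
    apply (rule sum.reindex_bij_witness[of _ "\<lambda>X j. j \<in> X" "\<lambda>e. {j. e j}"])
    by (auto simp: prod.If_cases Compl_eq_Diff_UNIV)
  also have "\<dots> = (\<Prod>j\<in>UNIV. a j + b j)" by (rule prod_add[symmetric]) simp
  finally show ?thesis .
qed

lemma norm_add_sq: "(norm (a + b))\<^sup>2 = (norm a)\<^sup>2 + 2 * inner a b + (norm (b::'a::real_inner))\<^sup>2"
  using dot_norm[of a b] by simp

lemma cs_weighted:
  fixes u lam :: "nat \<Rightarrow> real"
  assumes "\<forall>i<Mh. lam i \<ge> 0" "(\<Sum>i<Mh. lam i) = 1"
  shows "(\<Sum>i<Mh. lam i * u i)\<^sup>2 \<le> (\<Sum>i<Mh. lam i * (u i)\<^sup>2)"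
proof -
  define S where "S = (\<Sum>i<Mh. lam i * u i)"
  have "0 \<le> (\<Sum>i<Mh. lam i * (u i - S)\<^sup>2)"
    using assms(1) by (intro sum_nonneg) auto
  also have "\<dots> = (\<Sum>i<Mh. lam i * (u i)\<^sup>2) - 2 * S * (\<Sum>i<Mh. lam i * u i) + S\<^sup>2 * (\<Sum>i<Mh. lam i)"
    by (simp add: power2_diff algebra_simps sum.distrib sum_subtractf sum_distrib_left sum_distrib_right)
  finally show ?thesis using assms(2) unfolding S_def by (simp add: power2_eq_square)
qed

lemma core:
  fixes D :: "real^'d" and B :: "real^'p^'d" and xi :: "nat \<Rightarrow> real^'p"
  assumes lam0: "\<forall>i<Mh. lam i \<ge> 0" and lam1: "(\<Sum>i<Mh. lam i) = 1"
    and lamk: "\<And>k. (\<Sum>i<Mh. lam i * xi i $ k) = 0"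
    and D: "norm D \<le> (1 + C1 * h) * r" and B: "norm B \<le> C1 * r"
    and h: "h \<ge> 0" and C1: "C1 \<ge> 0" and r: "r \<ge> 0"
  shows "(\<Sum>i<Mh. lam i * norm (D + sqrt h *\<^sub>R (B *v xi i)))
     \<le> (1 + (C1 + (real CARD('d))\<^sup>2 * C1\<^sup>2 * (\<Sum>i<Mh. lam i * (norm (xi i))\<^sup>2)) * h) * r"
proof -
  define c where "c = real CARD('d)"
  define Q where "Q = (\<Sum>i<Mh. lam i * (norm (xi i))\<^sup>2)"
  have Q0: "Q \<ge> 0" unfolding Q_def using lam0 by (intro sum_nonneg) auto
  have c0: "c \<ge> 0" unfolding c_def by simp
  define w where "w = D v* B"
  have inner0: "(\<Sum>i<Mh. lam i * inner D (B *v xi i)) = 0"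
  proof -
    have "(\<Sum>i<Mh. lam i * inner D (B *v xi i)) = (\<Sum>i<Mh. \<Sum>k\<in>UNIV. w $ k * (lam i * xi i $ k))"
    proof -
      have "inner D (B *v xi i) = inner w (xi i)" for i unfolding w_def by (rule dot_lmul_matrix[symmetric])
      then show ?thesis by (simp add: inner_vec_def sum_distrib_left algebra_simps)
    qed
    also have "\<dots> = (\<Sum>k\<in>UNIV. w $ k * (\<Sum>i<Mh. lam i * xi i $ k))"
      by (subst sum.swap) (simp add: sum_distrib_left)
    also have "\<dots> = 0" by (simp add: lamk)
    finally show ?thesis .
  qed
  have Bx: "(norm (B *v xi i))\<^sup>2 \<le> c\<^sup>2 * C1\<^sup>2 * r\<^sup>2 * (norm (xi i))\<^sup>2" for i
  proof -
    have "norm (B *v xi i) \<le> c * norm B * norm (xi i)" unfolding c_def by (rule norm_mat_vec)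
    also have "\<dots> \<le> c * (C1 * r) * norm (xi i)"
      using B c0 by (simp add: mult_left_mono mult_right_mono)
    finally have "(norm (B *v xi i))\<^sup>2 \<le> (c * (C1 * r) * norm (xi i))\<^sup>2"
      by (rule power_mono) simp
    then show ?thesis by (simp add: power_mult_distrib)
  qed
  define u where "u i = norm (D + sqrt h *\<^sub>R (B *v xi i))" for i
  have usq: "(u i)\<^sup>2 = (norm D)\<^sup>2 + 2 * sqrt h * inner D (B *v xi i) + h * (norm (B *v xi i))\<^sup>2" for i
    unfolding u_def norm_add_sq using h by (simp add: power_mult_distrib)
  have "(\<Sum>i<Mh. lam i * (u i)\<^sup>2) = (norm D)\<^sup>2 * (\<Sum>i<Mh. lam i) + 2 * sqrt h * (\<Sum>i<Mh. lam i * inner D (B *v xi i))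
        + h * (\<Sum>i<Mh. lam i * (norm (B *v xi i))\<^sup>2)"
    by (simp add: usq algebra_simps sum.distrib sum_distrib_left sum_distrib_right)
  also have "\<dots> = (norm D)\<^sup>2 + h * (\<Sum>i<Mh. lam i * (norm (B *v xi i))\<^sup>2)"
    by (simp add: lam1 inner0)
  also have "\<dots> \<le> ((1 + C1 * h) * r)\<^sup>2 + h * (\<Sum>i<Mh. lam i * (c\<^sup>2 * C1\<^sup>2 * r\<^sup>2 * (norm (xi i))\<^sup>2))"
  proof (rule add_mono)
    show "(norm D)\<^sup>2 \<le> ((1 + C1 * h) * r)\<^sup>2" by (rule power_mono[OF D]) simp
    show "h * (\<Sum>i<Mh. lam i * (norm (B *v xi i))\<^sup>2) \<le> h * (\<Sum>i<Mh. lam i * (c\<^sup>2 * C1\<^sup>2 * r\<^sup>2 * (norm (xi i))\<^sup>2))"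
      using h lam0 Bx by (intro mult_left_mono sum_mono) (auto intro: mult_left_mono)
  qed
  also have "\<dots> = r\<^sup>2 * ((1 + C1 * h)\<^sup>2 + (c\<^sup>2 * C1\<^sup>2 * Q) * h)"
    by (simp add: Q_def sum_distrib_left power_mult_distrib algebra_simps power2_eq_square)
  also have "\<dots> \<le> r\<^sup>2 * ((1 + C1 * h) + (c\<^sup>2 * C1\<^sup>2 * Q) * h)\<^sup>2"
  proof (rule mult_left_mono)
    define a where "a = 1 + C1 * h"
    define b where "b = (c\<^sup>2 * C1\<^sup>2 * Q) * h"
    have a1: "a \<ge> 1" unfolding a_def using C1 h by simp
    have b0: "b \<ge> 0" unfolding b_def using Q0 h by simp
    have "a\<^sup>2 + b \<le> (a + b)\<^sup>2"
    proof -
      have "b \<le> 2 * a * b" using a1 b0 using mult_right_mono[of 1 "2*a" b] by simp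
      then show ?thesis using b0 by (simp add: power2_eq_square algebra_simps) (smt (verit) mult_nonneg_nonneg b0)
    qed
    then show "(1 + C1 * h)\<^sup>2 + (c\<^sup>2 * C1\<^sup>2 * Q) * h \<le> ((1 + C1 * h) + (c\<^sup>2 * C1\<^sup>2 * Q) * h)\<^sup>2"
      by (simp add: a_def b_def)
  qed simp
  also have "\<dots> = ((1 + (C1 + c\<^sup>2 * C1\<^sup>2 * Q) * h) * r)\<^sup>2"
  proof -
    have "(1 + C1 * h) + (c\<^sup>2 * C1\<^sup>2 * Q) * h = 1 + (C1 + c\<^sup>2 * C1\<^sup>2 * Q) * h"
      by (simp add: algebra_simps)
    then show ?thesis by (simp only: power_mult_distrib mult.commute)
  qed
  finally have "(\<Sum>i<Mh. lam i * u i)\<^sup>2 \<le> ((1 + (C1 + c\<^sup>2 * C1\<^sup>2 * Q) * h) * r)\<^sup>2"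
    using cs_weighted[OF lam0 lam1, of u] by linarith
  then have "(\<Sum>i<Mh. lam i * u i) \<le> (1 + (C1 + c\<^sup>2 * C1\<^sup>2 * Q) * h) * r"
    apply (rule power2_le_imp_le)
    using C1 h Q0 r by simp
  then show ?thesis unfolding u_def c_def Q_def .
qed

lemma lip_step:
  fixes mu :: "real \<Rightarrow> real^'d \<Rightarrow> real^'q \<Rightarrow> real^'d"
    and sg :: "real \<Rightarrow> real^'d \<Rightarrow> real^'q \<Rightarrow> real^'p^'d"
    and f :: "real^'d \<Rightarrow> real" and xi :: "nat \<Rightarrow> real^'p"
  assumes A: "A \<noteq> {}"
    and lam0: "\<forall>i<Mh. lam i \<ge> 0" and lam1: "(\<Sum>i<Mh. lam i) = 1"
    and lamk: "\<And>k. (\<Sum>i<Mh. lam i * xi i $ k) = 0"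
    and Lipc: "\<And>x y a. a \<in> A \<Longrightarrow> norm (mu t x a - mu t y a) + norm (sg t x a - sg t y a) \<le> C1 * norm (x - y)"
    and bdd: "\<And>x. bdd_above ((\<lambda>a. \<Sum>i<Mh. lam i * f (x + h *\<^sub>R mu t x a + sqrt h *\<^sub>R (sg t x a *v xi i))) ` A)"
    and f: "\<And>x y. \<bar>f x - f y\<bar> \<le> Lf * norm (x - y)" and Lf: "Lf \<ge> 0" and h: "h \<ge> 0" and C1: "C1 \<ge> 0"
  shows "\<bar>dp_step h mu sg A Mh lam xi t f x - dp_step h mu sg A Mh lam xi t f y\<bar>
     \<le> Lf * ((1 + (C1 + (real CARD('d))\<^sup>2 * C1\<^sup>2 * (\<Sum>i<Mh. lam i * (norm (xi i))\<^sup>2)) * h) * norm (x - y))"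
  unfolding dp_step_def
proof (rule sup_diff[OF A bdd])
  fix a assume a: "a \<in> A"
  define D where "D = (x - y) + h *\<^sub>R (mu t x a - mu t y a)"
  define B where "B = sg t x a - sg t y a"
  have Lc: "norm (mu t x a - mu t y a) \<le> C1 * norm (x - y)" "norm B \<le> C1 * norm (x - y)"
    using Lipc[OF a, of x y] norm_ge_zero[of B] norm_ge_zero[of "mu t x a - mu t y a"] unfolding B_def by linarith+
  have Dn: "norm D \<le> (1 + C1 * h) * norm (x - y)"
  proof -
    have "norm D \<le> norm (x - y) + h * norm (mu t x a - mu t y a)"
      unfolding D_def using h by (metis abs_of_nonneg norm_scaleR norm_triangle_ineq)
    also have "\<dots> \<le> norm (x - y) + h * (C1 * norm (x - y))"
      using Lc(1) h by (simp add: mult_left_mono)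
    finally show ?thesis by (simp add: algebra_simps)
  qed
  have diff: "(x + h *\<^sub>R mu t x a + sqrt h *\<^sub>R (sg t x a *v xi i)) - (y + h *\<^sub>R mu t y a + sqrt h *\<^sub>R (sg t y a *v xi i))
      = D + sqrt h *\<^sub>R (B *v xi i)" for i
    unfolding D_def B_def by (simp add: algebra_simps matrix_vector_mult_diff_rdistrib)
  have "\<bar>(\<Sum>i<Mh. lam i * f (x + h *\<^sub>R mu t x a + sqrt h *\<^sub>R (sg t x a *v xi i)))
       - (\<Sum>i<Mh. lam i * f (y + h *\<^sub>R mu t y a + sqrt h *\<^sub>R (sg t y a *v xi i)))\<bar>
      = \<bar>\<Sum>i<Mh. lam i * (f (x + h *\<^sub>R mu t x a + sqrt h *\<^sub>R (sg t x a *v xi i)) - f (y + h *\<^sub>R mu t y a + sqrt h *\<^sub>R (sg t y a *v xi i)))\<bar>"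
    by (simp add: sum_subtractf algebra_simps)
  also have "\<dots> \<le> (\<Sum>i<Mh. \<bar>lam i * (f (x + h *\<^sub>R mu t x a + sqrt h *\<^sub>R (sg t x a *v xi i)) - f (y + h *\<^sub>R mu t y a + sqrt h *\<^sub>R (sg t y a *v xi i)))\<bar>)"
    by (rule sum_abs)
  also have "\<dots> \<le> (\<Sum>i<Mh. lam i * (Lf * norm (D + sqrt h *\<^sub>R (B *v xi i))))"
  proof (rule sum_mono)
    fix i assume i: "i \<in> {..<Mh}"
    show "\<bar>lam i * (f (x + h *\<^sub>R mu t x a + sqrt h *\<^sub>R (sg t x a *v xi i)) - f (y + h *\<^sub>R mu t y a + sqrt h *\<^sub>R (sg t y a *v xi i)))\<bar>
        \<le> lam i * (Lf * norm (D + sqrt h *\<^sub>R (B *v xi i)))"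
      using lam0 i f[of "x + h *\<^sub>R mu t x a + sqrt h *\<^sub>R (sg t x a *v xi i)" "y + h *\<^sub>R mu t y a + sqrt h *\<^sub>R (sg t y a *v xi i)"]
      unfolding diff by (simp add: abs_mult mult_left_mono)
  qed
  also have "\<dots> = Lf * (\<Sum>i<Mh. lam i * norm (D + sqrt h *\<^sub>R (B *v xi i)))"
    by (simp add: sum_distrib_left algebra_simps)
  also have "\<dots> \<le> Lf * ((1 + (C1 + (real CARD('d))\<^sup>2 * C1\<^sup>2 * (\<Sum>i<Mh. lam i * (norm (xi i))\<^sup>2)) * h) * norm (x - y))"
    by (rule mult_left_mono[OF core[OF lam0 lam1 lamk Dn Lc(2) h C1 norm_ge_zero] Lf])
  finally show "\<bar>(\<Sum>i<Mh. lam i * f (x + h *\<^sub>R mu t x a + sqrt h *\<^sub>R (sg t x a *v xi i)))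
       - (\<Sum>i<Mh. lam i * f (y + h *\<^sub>R mu t y a + sqrt h *\<^sub>R (sg t y a *v xi i)))\<bar>
     \<le> Lf * ((1 + (C1 + (real CARD('d))\<^sup>2 * C1\<^sup>2 * (\<Sum>i<Mh. lam i * (norm (xi i))\<^sup>2)) * h) * norm (x - y))" .
qed

lemma bdd_step:
  fixes mu :: "real \<Rightarrow> real^'d \<Rightarrow> real^'q \<Rightarrow> real^'d"
    and sg :: "real \<Rightarrow> real^'d \<Rightarrow> real^'q \<Rightarrow> real^'p^'d"
    and f :: "real^'d \<Rightarrow> real" and xi :: "nat \<Rightarrow> real^'p"
  assumes lam0: "\<forall>i<Mh. lam i \<ge> 0"
    and Bm: "\<And>a. a \<in> A \<Longrightarrow> norm (mu t x a) \<le> Bm"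
    and Bs: "\<And>a. a \<in> A \<Longrightarrow> norm (sg t x a) \<le> Bs"
    and f: "\<And>x y. \<bar>f x - f y\<bar> \<le> Lf * norm (x - y)" and Lf: "Lf \<ge> 0" and h: "h \<ge> 0"
  shows "bdd_above ((\<lambda>a. \<Sum>i<Mh. lam i * f (x + h *\<^sub>R mu t x a + sqrt h *\<^sub>R (sg t x a *v xi i))) ` A)"
proof -
  define c where "c = real CARD('d)"
  have c0: "c \<ge> 0" unfolding c_def by simp
  have "(\<Sum>i<Mh. lam i * f (x + h *\<^sub>R mu t x a + sqrt h *\<^sub>R (sg t x a *v xi i)))
     \<le> (\<Sum>i<Mh. lam i * (\<bar>f 0\<bar> + Lf * (norm x + h * Bm + sqrt h * (c * Bs * norm (xi i)))))" if a: "a \<in> A" for a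
  proof (rule sum_mono)
    fix i assume i: "i \<in> {..<Mh}"
    define z where "z = x + h *\<^sub>R mu t x a + sqrt h *\<^sub>R (sg t x a *v xi i)"
    have "norm z \<le> norm x + norm (h *\<^sub>R mu t x a) + norm (sqrt h *\<^sub>R (sg t x a *v xi i))"
      unfolding z_def by (meson add_mono norm_triangle_ineq order_trans order_refl)
    also have "\<dots> \<le> norm x + h * Bm + sqrt h * (c * Bs * norm (xi i))"
    proof -
      have "norm (h *\<^sub>R mu t x a) \<le> h * Bm" using h Bm[OF a] by (simp add: mult_left_mono)
      moreover have "norm (sg t x a *v xi i) \<le> c * Bs * norm (xi i)"
      proof -
        have "norm (sg t x a *v xi i) \<le> c * norm (sg t x a) * norm (xi i)" unfolding c_def by (rule norm_mat_vec)
        also have "\<dots> \<le> c * Bs * norm (xi i)" using Bs[OF a] c0 by (simp add: mult_left_mono mult_right_mono)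
        finally show ?thesis .
      qed
      then have "norm (sqrt h *\<^sub>R (sg t x a *v xi i)) \<le> sqrt h * (c * Bs * norm (xi i))"
        using h by (simp add: mult_left_mono)
      ultimately show ?thesis by linarith
    qed
    finally have nz: "norm z \<le> norm x + h * Bm + sqrt h * (c * Bs * norm (xi i))" .
    have "f z \<le> \<bar>f 0\<bar> + Lf * norm z" using f[of z 0] by simp
    also have "\<dots> \<le> \<bar>f 0\<bar> + Lf * (norm x + h * Bm + sqrt h * (c * Bs * norm (xi i)))"
      using nz Lf by (simp add: mult_left_mono)
    finally show "lam i * f z \<le> lam i * (\<bar>f 0\<bar> + Lf * (norm x + h * Bm + sqrt h * (c * Bs * norm (xi i))))"
      using lam0 i by (simp add: mult_left_mono)
  qed
  then show ?thesis by (intro bdd_aboveI2) blast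
qed

lemma interp_err:
  fixes dx :: "real^'d" and g :: "int^'d \<Rightarrow> real" and f :: "real^'d \<Rightarrow> real"
  assumes dx: "\<forall>j. dx$j > 0"
    and f: "\<And>x y. \<bar>f x - f y\<bar> \<le> Lf * norm (x - y)" and Lf: "Lf \<ge> 0"
    and E: "\<And>m. \<bar>f (grid_pt dx m) - g m\<bar> \<le> E"
  shows "\<bar>f y - interp dx g y\<bar> \<le> E + Lf * norm dx"
proof -
  define m where "m = (\<chi> j. \<lfloor>y$j / dx$j\<rfloor>)"
  define \<theta> where "\<theta> = (\<lambda>j. y$j / dx$j - real_of_int (m$j))"
  define W where "W = (\<lambda>e::'d \<Rightarrow> bool. \<Prod>j\<in>UNIV. if e j then \<theta> j else 1 - \<theta> j)"
  define me where "me = (\<lambda>e::'d \<Rightarrow> bool. (\<chi> j. m$j + (if e j then 1 else 0)) :: int^'d)"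
  have th: "0 \<le> \<theta> j" "\<theta> j < 1" for j
    unfolding \<theta>_def m_def by (simp_all add: of_int_floor_le) linarith
  have W0: "W e \<ge> 0" for e unfolding W_def using th by (intro prod_nonneg) (auto simp: less_imp_le)
  have W1: "(\<Sum>e\<in>UNIV. W e) = 1" unfolding W_def prod_if_sum by simp
  have I: "interp dx g y = (\<Sum>e\<in>UNIV. W e * g (me e))"
    unfolding interp_def Let_def W_def me_def \<theta>_def m_def by simp
  have dist: "norm (y - grid_pt dx (me e)) \<le> norm dx" for e
  proof (rule norm_le_componentwise_cart)
    fix j
    have "(y - grid_pt dx (me e)) $ j = dx$j * (\<theta> j - (if e j then 1 else 0))"
      using dx[rule_format, of j] unfolding grid_pt_def me_def \<theta>_def
      by (simp add: algebra_simps)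
    moreover have "\<bar>\<theta> j - (if e j then 1 else 0)\<bar> \<le> 1" using th[of j] by auto
    ultimately show "norm ((y - grid_pt dx (me e)) $ j) \<le> norm (dx $ j)"
      using dx[rule_format, of j] by (simp add: abs_mult mult_left_le)
  qed
  have "f y - interp dx g y = (\<Sum>e\<in>UNIV. W e * (f y - g (me e)))"
    unfolding I by (simp add: algebra_simps sum_subtractf sum_distrib_right[symmetric] W1)
  also have "\<bar>\<dots>\<bar> \<le> (\<Sum>e\<in>UNIV. W e * (E + Lf * norm dx))"
  proof -
    have "\<bar>\<Sum>e\<in>UNIV. W e * (f y - g (me e))\<bar> \<le> (\<Sum>e\<in>UNIV. \<bar>W e * (f y - g (me e))\<bar>)" by (rule sum_abs)
    also have "\<dots> \<le> (\<Sum>e\<in>UNIV. W e * (E + Lf * norm dx))"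
    proof (rule sum_mono)
      fix e :: "'d \<Rightarrow> bool"
      have "\<bar>f y - g (me e)\<bar> \<le> \<bar>f y - f (grid_pt dx (me e))\<bar> + \<bar>f (grid_pt dx (me e)) - g (me e)\<bar>" by linarith
      also have "\<dots> \<le> Lf * norm dx + E"
        using f[of y "grid_pt dx (me e)"] E[of "me e"] dist[of e] Lf
        by (smt (verit) mult_left_mono)
      finally show "\<bar>W e * (f y - g (me e))\<bar> \<le> W e * (E + Lf * norm dx)"
        using W0[of e] by (simp add: abs_mult mult_left_mono)
    qed
    finally show ?thesis .
  qed
  also have "\<dots> = E + Lf * norm dx" by (simp add: sum_distrib_right[symmetric] W1)
  finally show ?thesis .
qed

lemma err_step:
  fixes mu :: "real \<Rightarrow> real^'d \<Rightarrow> real^'q \<Rightarrow> real^'d"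
    and sg :: "real \<Rightarrow> real^'d \<Rightarrow> real^'q \<Rightarrow> real^'p^'d"
    and f :: "real^'d \<Rightarrow> real" and xi :: "nat \<Rightarrow> real^'p" and g :: "int^'d \<Rightarrow> real"
  assumes A: "A \<noteq> {}"
    and lam0: "\<forall>i<Mh. lam i \<ge> 0" and lam1: "(\<Sum>i<Mh. lam i) = 1"
    and bdd: "bdd_above ((\<lambda>a. \<Sum>i<Mh. lam i * f (x + h *\<^sub>R mu t x a + sqrt h *\<^sub>R (sg t x a *v xi i))) ` A)"
    and dx: "\<forall>j. dx$j > 0"
    and f: "\<And>x y. \<bar>f x - f y\<bar> \<le> Lf * norm (x - y)" and Lf: "Lf \<ge> 0"
    and E: "\<And>m. \<bar>f (grid_pt dx m) - g m\<bar> \<le> E"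
  shows "\<bar>dp_step h mu sg A Mh lam xi t f x - dp_step h mu sg A Mh lam xi t (interp dx g) x\<bar> \<le> E + Lf * norm dx"
proof -
  have "\<bar>dp_step h mu sg A Mh lam xi t (interp dx g) x - dp_step h mu sg A Mh lam xi t f x\<bar> \<le> E + Lf * norm dx"
    unfolding dp_step_def
  proof (rule sup_diff[OF A bdd])
    fix a assume a: "a \<in> A"
    let ?z = "\<lambda>i. x + h *\<^sub>R mu t x a + sqrt h *\<^sub>R (sg t x a *v xi i)"
    have "\<bar>(\<Sum>i<Mh. lam i * interp dx g (?z i)) - (\<Sum>i<Mh. lam i * f (?z i))\<bar>
        = \<bar>\<Sum>i<Mh. lam i * (f (?z i) - interp dx g (?z i))\<bar>"
      by (simp add: sum_subtractf algebra_simps abs_minus_commute)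
    also have "\<dots> \<le> (\<Sum>i<Mh. \<bar>lam i * (f (?z i) - interp dx g (?z i))\<bar>)" by (rule sum_abs)
    also have "\<dots> \<le> (\<Sum>i<Mh. lam i * (E + Lf * norm dx))"
    proof (rule sum_mono)
      fix i assume i: "i \<in> {..<Mh}"
      show "\<bar>lam i * (f (?z i) - interp dx g (?z i))\<bar> \<le> lam i * (E + Lf * norm dx)"
        using interp_err[OF dx f Lf E, of "?z i"] lam0 i by (simp add: abs_mult mult_left_mono)
    qed
    also have "\<dots> = E + Lf * norm dx" by (simp add: sum_distrib_right[symmetric] lam1)
    finally show "\<bar>(\<Sum>i<Mh. lam i * interp dx g (?z i)) - (\<Sum>i<Mh. lam i * f (?z i))\<bar> \<le> E + Lf * norm dx" .
  qed
  then show ?thesis by (simp add: abs_minus_commute)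
qed

theorem proposition3p4:
  fixes T C0 L :: real
    and mu :: "real \<Rightarrow> real^'d \<Rightarrow> real^'q \<Rightarrow> real^'d"
    and sg :: "real \<Rightarrow> real^'d \<Rightarrow> real^'q \<Rightarrow> real^'p^'d"
    and A :: "(real^'q) set"
    and psi :: "real^'d \<Rightarrow> real"
    and M Mh :: nat
    and lam :: "nat \<Rightarrow> real"
    and xi :: "nat \<Rightarrow> real^'p"
  assumes "T > 0"
    and "compact A" and "A \<noteq> {}"
    and "continuous_on ({0..T} \<times> UNIV \<times> A) (\<lambda>(t, x, a). mu t x a)"
    and "continuous_on ({0..T} \<times> UNIV \<times> A) (\<lambda>(t, x, a). sg t x a)"
    and "\<forall>t\<in>{0..T}. \<forall>s\<in>{0..T}. \<forall>x y. \<forall>a\<in>A.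
           norm (mu t x a - mu s y a) + norm (sg t x a - sg s y a)
             \<le> C0 * (norm (x - y) + sqrt \<bar>t - s\<bar>)"
    and "continuous_on UNIV psi"
    and "\<forall>x y. \<bar>psi x - psi y\<bar> \<le> L * norm (x - y)"
    and "M \<ge> 2"
    and "\<forall>i<Mh. lam i \<ge> 0"
    and "cubature_exact Mh lam xi (2 * M - 1)"
  shows "\<exists>C\<ge>0. \<forall>(N::nat) (dx::real^'d). N \<ge> 1 \<longrightarrow> (\<forall>j. dx $ j > 0) \<longrightarrow>
           (\<forall>n\<le>N. \<forall>m::int^'d.
              \<bar>vhat T N mu sg A Mh lam xi psi n (grid_pt dx m)
               - V T N mu sg A Mh lam xi psi dx n m\<bar>
                \<le> C * norm dx / (T / real N))"
proof -
  note T = assms(1) and Ane = assms(3) and lam0 = assms(10)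
  define C1 where "C1 = \<bar>C0\<bar>"
  define L1 where "L1 = \<bar>L\<bar>"
  have C1: "C1 \<ge> 0" and L1: "L1 \<ge> 0" unfolding C1_def L1_def by simp_all
  have lam1: "(\<Sum>i<Mh. lam i) = 1" by (rule cub_facts(1)[OF assms(11) assms(9)])
  have lamk: "\<And>k. (\<Sum>i<Mh. lam i * xi i $ k) = 0" by (rule cub_facts(2)[OF assms(11) assms(9)])
  define Q where "Q = (\<Sum>i<Mh. lam i * (norm (xi i))\<^sup>2)"
  define K where "K = C1 + (real CARD('d))\<^sup>2 * C1\<^sup>2 * Q"
  have Q0: "Q \<ge> 0" unfolding Q_def using lam0 by (intro sum_nonneg) auto
  have K0: "K \<ge> 0" unfolding K_def using C1 Q0 by simp
  have Lipc: "norm (mu t x a - mu t y a) + norm (sg t x a - sg t y a) \<le> C1 * norm (x - y)"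
    if "t \<in> {0..T}" "a \<in> A" for t x y a
  proof -
    have "norm (mu t x a - mu t y a) + norm (sg t x a - sg t y a) \<le> C0 * (norm (x - y) + sqrt \<bar>t - t\<bar>)"
      using assms(6) that by blast
    also have "\<dots> \<le> C1 * norm (x - y)" unfolding C1_def by (simp add: mult_right_mono)
    finally show ?thesis .
  qed
  have Bmu: "\<exists>Bm. \<forall>a\<in>A. norm (mu t x a) \<le> Bm" if t: "t \<in> {0..T}" for t x
  proof -
    have "continuous_on A ((\<lambda>(t, x, a). mu t x a) \<circ> (\<lambda>a. (t, x, a)))"
      by (rule continuous_on_compose[OF _ continuous_on_subset[OF assms(4)]])
         (use t in \<open>auto intro!: continuous_intros\<close>)
    then have "continuous_on A (\<lambda>a. mu t x a)" by (simp add: o_def)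
    then have "bounded ((\<lambda>a. mu t x a) ` A)"
      using compact_continuous_image[OF _ assms(2)] compact_imp_bounded by blast
    then show ?thesis by (auto simp: bounded_iff)
  qed
  have Bsg: "\<exists>Bs. \<forall>a\<in>A. norm (sg t x a) \<le> Bs" if t: "t \<in> {0..T}" for t x
  proof -
    have "continuous_on A ((\<lambda>(t, x, a). sg t x a) \<circ> (\<lambda>a. (t, x, a)))"
      by (rule continuous_on_compose[OF _ continuous_on_subset[OF assms(5)]])
         (use t in \<open>auto intro!: continuous_intros\<close>)
    then have "continuous_on A (\<lambda>a. sg t x a)" by (simp add: o_def)
    then have "bounded ((\<lambda>a. sg t x a) ` A)"
      using compact_continuous_image[OF _ assms(2)] compact_imp_bounded by blast
    then show ?thesis by (auto simp: bounded_iff)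
  qed
  have psiL: "\<bar>psi x - psi y\<bar> \<le> L1 * norm (x - y)" for x y
  proof -
    have "\<bar>psi x - psi y\<bar> \<le> L * norm (x - y)" using assms(8) by blast
    also have "\<dots> \<le> L1 * norm (x - y)" unfolding L1_def by (simp add: mult_right_mono)
    finally show ?thesis .
  qed
  show ?thesis
  proof (intro exI[of _ "T * L1 * exp (K * T)"] conjI allI impI)
    show "0 \<le> T * L1 * exp (K * T)" using T L1 by simp
    fix N :: nat and dx :: "real^'d" and n :: nat and m :: "int^'d"
    assume N: "1 \<le> N" and dx: "\<forall>j. 0 < dx $ j" and n: "n \<le> N"
    define h where "h = T / real N"
    have h0: "h > 0" unfolding h_def using T N by simp
    have tk: "real (N - Suc k) * h \<in> {0..T}" for k
    proof -
      have "real (N - Suc k) * h \<le> real N * h" using h0 by (intro mult_right_mono) auto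
      also have "\<dots> = T" unfolding h_def using N by simp
      finally show ?thesis using h0 by simp
    qed
    let ?vh = "vhat_rev T N mu sg A Mh lam xi psi"
    let ?V = "V_rev T N mu sg A Mh lam xi psi dx"
    have main: "(\<forall>x y. \<bar>?vh k x - ?vh k y\<bar> \<le> L1 * (1 + K * h) ^ k * norm (x - y)) \<and>
       (\<forall>m. \<bar>?vh k (grid_pt dx m) - ?V k m\<bar> \<le> real k * (L1 * (1 + K * h) ^ k) * norm dx)" for k
    proof (induction k)
      case 0
      then show ?case using psiL by simp
    next
      case (Suc k)
      define t where "t = real (N - Suc k) * h"
      have t: "t \<in> {0..T}" unfolding t_def by (rule tk)
      define Lf where "Lf = L1 * (1 + K * h) ^ k"
      have Lf: "Lf \<ge> 0" unfolding Lf_def using L1 K0 h0 by simp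
      have fL: "\<And>x y. \<bar>?vh k x - ?vh k y\<bar> \<le> Lf * norm (x - y)" using Suc.IH unfolding Lf_def by blast
      have fE: "\<And>m. \<bar>?vh k (grid_pt dx m) - ?V k m\<bar> \<le> real k * Lf * norm dx" using Suc.IH unfolding Lf_def by blast
      have eq1: "?vh (Suc k) = dp_step h mu sg A Mh lam xi t (?vh k)"
        by (simp add: h_def t_def)
      have eq2: "?V (Suc k) m = dp_step h mu sg A Mh lam xi t (interp dx (?V k)) (grid_pt dx m)" for m
        by (simp add: h_def t_def)
      have bdd: "bdd_above ((\<lambda>a. \<Sum>i<Mh. lam i * ?vh k (x + h *\<^sub>R mu t x a + sqrt h *\<^sub>R (sg t x a *v xi i))) ` A)" for x
      proof -
        obtain Bm where Bm: "\<forall>a\<in>A. norm (mu t x a) \<le> Bm" using Bmu[OF t] by blast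
        obtain Bs where Bs: "\<forall>a\<in>A. norm (sg t x a) \<le> Bs" using Bsg[OF t] by blast
        show ?thesis by (rule bdd_step[where f="?vh k" and t=t and h=h and mu=mu and sg=sg and A=A and Mh=Mh and lam=lam and xi=xi and Lf=Lf, OF lam0 _ _ fL Lf]) (use Bm Bs h0 in auto)
      qed
      have lip: "\<bar>?vh (Suc k) x - ?vh (Suc k) y\<bar> \<le> L1 * (1 + K * h) ^ Suc k * norm (x - y)" for x y
      proof -
        have "\<bar>?vh (Suc k) x - ?vh (Suc k) y\<bar> \<le> Lf * ((1 + K * h) * norm (x - y))"
          unfolding eq1 K_def Q_def
          apply (rule lip_step)
          apply (rule Ane)
          apply (rule lam0)
          apply (rule lam1)
          apply (rule lamk)
          apply (erule Lipc[OF t])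
          apply (rule bdd)
          apply (rule fL)
          apply (rule Lf)
          using h0 apply simp
          apply (rule C1)
          done
        then show ?thesis unfolding Lf_def power_Suc2 by (simp only: mult.assoc)
      qed
      have err: "\<bar>?vh (Suc k) (grid_pt dx m) - ?V (Suc k) m\<bar> \<le> real (Suc k) * (L1 * (1 + K * h) ^ Suc k) * norm dx" for m
      proof -
        have "\<bar>?vh (Suc k) (grid_pt dx m) - ?V (Suc k) m\<bar> \<le> real k * Lf * norm dx + Lf * norm dx"
          unfolding eq1 eq2
          apply (rule err_step)
          apply (rule Ane)
          apply (rule lam0)
          apply (rule lam1)
          apply (rule bdd)
          apply (rule dx)
          apply (rule fL)
          apply (rule Lf)
          apply (rule fE)
          done
        also have "\<dots> = real (Suc k) * Lf * norm dx" by (simp add: algebra_simps)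
        also have "\<dots> \<le> real (Suc k) * (L1 * (1 + K * h) ^ Suc k) * norm dx"
        proof -
          have "Lf \<le> L1 * (1 + K * h) ^ Suc k"
            unfolding Lf_def using L1 K0 h0
            by (simp add: mult_left_mono mult_le_cancel_left1 power_Suc2 del: power_Suc)
          then show ?thesis by (intro mult_right_mono mult_left_mono) auto
        qed
        finally show ?thesis .
      qed
      show ?case using lip err by blast
    qed
    define k where "k = N - n"
    have "\<bar>vhat T N mu sg A Mh lam xi psi n (grid_pt dx m) - V T N mu sg A Mh lam xi psi dx n m\<bar>
        \<le> real k * (L1 * (1 + K * h) ^ k) * norm dx"
      unfolding vhat_def V_def k_def using main by blast
    also have "\<dots> \<le> real N * (L1 * exp (K * T)) * norm dx"
    proof -
      have "(1 + K * h) ^ k \<le> (1 + K * h) ^ N" unfolding k_def using K0 h0 by (intro power_increasing) auto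
      also have "\<dots> \<le> exp (K * h) ^ N" by (intro power_mono) (use K0 h0 in auto)
      also have "\<dots> = exp (K * T)" unfolding h_def using N by (simp add: exp_of_nat_mult[symmetric])
      finally have P: "(1 + K * h) ^ k \<le> exp (K * T)" .
      have P2: "L1 * (1 + K * h) ^ k \<le> L1 * exp (K * T)" using P L1 by (rule mult_left_mono)
      have kN: "real k \<le> real N" unfolding k_def by simp
      have "real k * (L1 * (1 + K * h) ^ k) \<le> real N * (L1 * exp (K * T))"
        by (rule mult_mono[OF kN P2]) (use L1 K0 h0 in auto)
      then show ?thesis by (rule mult_right_mono) simp
    qed
    also have "\<dots> = T * L1 * exp (K * T) * norm dx / (T / real N)"
      using T N by (simp add: field_simps)
    finally show "\<bar>vhat T N mu sg A Mh lam xi psi n (grid_pt dx m) - V T N mu sg A Mh lam xi psi dx n m\<bar>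
        \<le> T * L1 * exp (K * T) * norm dx / (T / real N)" .
  qed
qed

end
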